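(* Let $S\subseteq\mathbb{R}^n$ be a closed set, $\bar x\in S$ and $d\in T_S(\bar x)$. Then $$T_S^2(\bar x;d)+\hat T_S(\bar x;d)=T_S^2(\bar x;d)\quad\text{and}\quad T_S^{''}(\bar x;d)+\hat T_S(\bar x;d)=T_S^{''}(\bar x;d).$$
   Context: $T_S(\bar x)=\{d\mid \exists t_k\downarrow 0,\ d_k\to d,\ \bar x+t_kd_k\in S\}$ is the tangent cone. $T_S^2(\bar x;d):=\{w\mid \exists t_k\downarrow 0,\ w_k\to w,\ \bar x+t_kd+\tfrac12 t_k^2w_k\in S\}$ (outer second-order tangent set); $T_S^{''}(\bar x;d):=\{w\mid \exists (t_k,r_k)\downarrow(0,0),\ w_k\to w,\ t_k/r_k\to0,\ \bar x+t_kd+\tfrac12 t_kr_kw_k\in S\}$ (asymptotic second-order tangent cone). The directional regular (Clarke) tangent cone is the Painlevé–Kuratowski lower limit $\hat T_S(\bar x;d):=\liminf_{t\downarrow 0,\,d'\to d,\,\bar x+td'\in S}T_S(\bar x+td')$, i.e. the set of $v$ such that for every sequence $t_k\downarrow0$, $d'_k\to d$ with $\bar x+t_kd'_k\in S$ there exist $v_k\to v$ with $v_k\in T_S(\bar x+t_kd'_k)$ for all large $k$. *)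

theory Defs
  imports "HOL-Analysis.Analysis"
begin

definition tangent_cone :: "('a::real_normed_vector) set \<Rightarrow> 'a \<Rightarrow> 'a set" where
  "tangent_cone S x = {d. \<exists>(t::nat \<Rightarrow> real) dk. (\<forall>k. t k > 0) \<and> t \<longlonglongrightarrow> 0 \<and>
      dk \<longlonglongrightarrow> d \<and> (\<forall>k. x + t k *\<^sub>R dk k \<in> S)}"

definition second_order_tangent_set :: "('a::real_normed_vector) set \<Rightarrow> 'a \<Rightarrow> 'a \<Rightarrow> 'a set" where
  "second_order_tangent_set S x d = {w. \<exists>(t::nat \<Rightarrow> real) wk. (\<forall>k. t k > 0) \<and> t \<longlonglongrightarrow> 0 \<and>
      wk \<longlonglongrightarrow> w \<and> (\<forall>k. x + t k *\<^sub>R d + ((1/2) * (t k)\<^sup>2) *\<^sub>R wk k \<in> S)}"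

definition asymptotic_second_order_tangent_cone :: "('a::real_normed_vector) set \<Rightarrow> 'a \<Rightarrow> 'a \<Rightarrow> 'a set" where
  "asymptotic_second_order_tangent_cone S x d = {w. \<exists>(t::nat \<Rightarrow> real) (r::nat \<Rightarrow> real) wk.
      (\<forall>k. t k > 0) \<and> (\<forall>k. r k > 0) \<and> t \<longlonglongrightarrow> 0 \<and> r \<longlonglongrightarrow> 0 \<and>
      (\<lambda>k. t k / r k) \<longlonglongrightarrow> 0 \<and> wk \<longlonglongrightarrow> w \<and>
      (\<forall>k. x + t k *\<^sub>R d + ((1/2) * t k * r k) *\<^sub>R wk k \<in> S)}"

definition directional_regular_tangent_cone :: "('a::real_normed_vector) set \<Rightarrow> 'a \<Rightarrow> 'a \<Rightarrow> 'a set" where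
  "directional_regular_tangent_cone S x d = {v. \<forall>(t::nat \<Rightarrow> real) dk.
      (\<forall>k. t k > 0) \<and> t \<longlonglongrightarrow> 0 \<and> dk \<longlonglongrightarrow> d \<and> (\<forall>k. x + t k *\<^sub>R dk k \<in> S) \<longrightarrow>
      (\<exists>vk. vk \<longlonglongrightarrow> v \<and> (\<forall>\<^sub>F k in sequentially. vk k \<in> tangent_cone S (x + t k *\<^sub>R dk k)))}"

end

theory Submission
  imports Defs
begin

lemma dini_lemma:
  fixes S :: "'a::euclidean_space set" and y v :: 'a
  assumes S: "closed S" and y: "y \<in> S" and h: "h > 0" and e: "\<epsilon> > 0"
    and H: "\<And>s p. s \<in> {0..h} \<Longrightarrow> p \<in> S \<Longrightarrow> dist (y + s *\<^sub>R v) p = infdist (y + s *\<^sub>R v) S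
             \<Longrightarrow> \<exists>u\<in>tangent_cone S p. norm (u - v) < \<epsilon>"
  shows "infdist (y + h *\<^sub>R v) S \<le> 2 * \<epsilon> * h"
proof (rule ccontr)
  assume neg: "\<not> ?thesis"
  define g where "g s = infdist (y + s *\<^sub>R v) S - 2 * \<epsilon> * s" for s
  have cg: "continuous_on {0..h} g" unfolding g_def
    by (intro continuous_intros)
  define K where "K = {s \<in> {0..h}. g s \<le> 0}"
  have KK: "K = {0..h} \<inter> g -` {..0}" unfolding K_def by auto
  have "closed K" unfolding KK
    by (rule continuous_closed_preimage[OF cg]) auto
  moreover have "bounded K" unfolding KK by (rule bounded_subset[of "{0..h}"]) auto
  ultimately have "compact K" using compact_eq_bounded_closed by blast
  moreover have "0 \<in> K" using y h unfolding K_def g_def by simp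
  ultimately obtain s0 where s0K: "s0 \<in> K" and s0max: "\<And>s. s \<in> K \<Longrightarrow> s \<le> s0"
    using compact_attains_sup[of K] by blast
  have "g h > 0" using neg unfolding g_def by simp
  hence "h \<notin> K" unfolding K_def by auto
  with s0K have s0: "0 \<le> s0" "s0 < h" "g s0 \<le> 0" unfolding K_def
    by (auto simp: le_less)
  have Sne: "S \<noteq> {}" using y by auto
  obtain p where p: "p \<in> S" "infdist (y + s0 *\<^sub>R v) S = dist (y + s0 *\<^sub>R v) p"
    using infdist_attains_inf[OF S Sne] by blast
  obtain u where u: "u \<in> tangent_cone S p" "norm (u - v) < \<epsilon>"
    using H[of s0 p] s0 p by auto
  then obtain t uk where tk: "\<forall>k. t k > 0" "t \<longlonglongrightarrow> 0" "uk \<longlonglongrightarrow> u" "\<forall>k. p + t k *\<^sub>R uk k \<in> S"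
    unfolding tangent_cone_def by blast
  have "(\<lambda>k. norm (uk k - v)) \<longlonglongrightarrow> norm (u - v)"
    by (intro tendsto_intros tk)
  hence ev1: "\<forall>\<^sub>F k in sequentially. norm (uk k - v) < \<epsilon>"
    using u(2) order_tendstoD(2) by blast
  have ev2: "\<forall>\<^sub>F k in sequentially. t k < h - s0"
    using tk(2) s0(2) order_tendstoD(2) by force
  obtain k where k1: "norm (uk k - v) < \<epsilon>" and k2: "t k < h - s0"
    using eventually_happens'[OF _ eventually_conj[OF ev1 ev2]] by auto
  define s where "s = s0 + t k"
  have sin: "s \<in> {0..h}" using s0 k2 tk(1) unfolding s_def by (auto intro: less_imp_le add_nonneg_nonneg)
  have "infdist (y + s *\<^sub>R v) S \<le> dist (y + s *\<^sub>R v) (p + t k *\<^sub>R uk k)"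
    by (rule infdist_le) (use tk(4) in auto)
  also have "\<dots> = norm ((y + s0 *\<^sub>R v - p) + t k *\<^sub>R (v - uk k))"
    unfolding s_def dist_norm by (simp add: algebra_simps)
  also have "\<dots> \<le> norm (y + s0 *\<^sub>R v - p) + t k * norm (v - uk k)"
    using norm_triangle_ineq[of "y + s0 *\<^sub>R v - p"] tk(1)
    by (metis abs_of_pos norm_scaleR)
  also have "\<dots> \<le> infdist (y + s0 *\<^sub>R v) S + t k * \<epsilon>"
    using p(2) k1 tk(1)[rule_format, of k] by (simp add: dist_norm norm_minus_commute)
  finally have "g s \<le> g s0 + t k * \<epsilon> - 2 * \<epsilon> * t k"
    unfolding g_def s_def by (simp add: algebra_simps)
  also have "\<dots> < 0" using s0(3) mult_pos_pos[OF tk(1)[rule_format, of k] e] by (simp add: algebra_simps)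
  finally have "s \<in> K" using sin unfolding K_def by simp
  hence "s \<le> s0" by (rule s0max)
  thus False using tk(1)[rule_format, of k] unfolding s_def by simp
qed

lemma uniform_lemma:
  fixes S :: "'a::euclidean_space set"
  assumes v: "v \<in> directional_regular_tangent_cone S x d" and e: "\<epsilon> > 0"
  shows "\<exists>\<delta>>0. \<forall>t e'. 0 < t \<and> t < \<delta> \<and> norm (e' - d) < \<delta> \<and> x + t *\<^sub>R e' \<in> S \<longrightarrow>
           (\<exists>u\<in>tangent_cone S (x + t *\<^sub>R e'). norm (u - v) < \<epsilon>)"
proof (rule ccontr)
  assume "\<not> ?thesis"
  hence neg: "\<forall>\<delta>>0. \<exists>t e'. 0 < t \<and> t < \<delta> \<and> norm (e' - d) < \<delta> \<and> x + t *\<^sub>R e' \<in> S \<and>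
           (\<forall>u\<in>tangent_cone S (x + t *\<^sub>R e'). \<not> norm (u - v) < \<epsilon>)"
    by simp
  have "\<forall>k::nat. \<exists>t e'. 0 < t \<and> t < 1 / Suc k \<and> norm (e' - d) < 1 / Suc k \<and> x + t *\<^sub>R e' \<in> S \<and>
           (\<forall>u\<in>tangent_cone S (x + t *\<^sub>R e'). \<not> norm (u - v) < \<epsilon>)"
  proof
    fix k :: nat
    have "(0::real) < 1 / Suc k" by simp
    thus "\<exists>t e'. 0 < t \<and> t < 1 / Suc k \<and> norm (e' - d) < 1 / Suc k \<and> x + t *\<^sub>R e' \<in> S \<and>
           (\<forall>u\<in>tangent_cone S (x + t *\<^sub>R e'). \<not> norm (u - v) < \<epsilon>)"
      by (rule neg[rule_format])
  qed
  hence "\<exists>t ee. \<forall>k::nat. 0 < t k \<and> t k < 1 / Suc k \<and> norm (ee k - d) < 1 / Suc k \<and> x + t k *\<^sub>R ee k \<in> S \<and>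
           (\<forall>u\<in>tangent_cone S (x + t k *\<^sub>R ee k). \<not> norm (u - v) < \<epsilon>)"
    by (subst (asm) choice_iff, subst (asm) choice_iff) simp
  then obtain t ee where te: "\<And>k. 0 < t k" "\<And>k. t k < 1 / Suc k" "\<And>k. norm (ee k - d) < 1 / Suc k"
    "\<And>k. x + t k *\<^sub>R ee k \<in> S" "\<And>k. \<forall>u\<in>tangent_cone S (x + t k *\<^sub>R ee k). \<not> norm (u - v) < \<epsilon>"
    by blast
  have t0: "t \<longlonglongrightarrow> 0"
  proof (rule tendsto_sandwich[of "\<lambda>_. 0" _ _ "\<lambda>k. 1 / Suc k"])
    show "\<forall>\<^sub>F n in sequentially. 0 \<le> t n" using te(1) by (simp add: less_imp_le)
    show "\<forall>\<^sub>F n in sequentially. t n \<le> 1 / Suc n" using te(2) by (simp add: less_imp_le)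
    show "(\<lambda>k. 1 / real (Suc k)) \<longlonglongrightarrow> 0" by (rule LIMSEQ_inverse_real_of_nat[unfolded inverse_eq_divide])
  qed simp
  have "(\<lambda>k. norm (ee k - d)) \<longlonglongrightarrow> 0"
  proof (rule tendsto_sandwich[of "\<lambda>_. 0" _ _ "\<lambda>k. 1 / Suc k"])
    show "\<forall>\<^sub>F n in sequentially. norm (ee n - d) \<le> 1 / Suc n" using te(3) by (simp add: less_imp_le)
    show "(\<lambda>k. 1 / real (Suc k)) \<longlonglongrightarrow> 0" by (rule LIMSEQ_inverse_real_of_nat[unfolded inverse_eq_divide])
  qed simp_all
  hence ed: "ee \<longlonglongrightarrow> d"
    using tendsto_norm_zero_iff[of "\<lambda>k. ee k - d"] LIM_zero_cancel by blast
  obtain vk where vk: "vk \<longlonglongrightarrow> v" "\<forall>\<^sub>F k in sequentially. vk k \<in> tangent_cone S (x + t k *\<^sub>R ee k)"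
  proof -
    have vv: "\<forall>(t::nat \<Rightarrow> real) dk. (\<forall>k. t k > 0) \<and> t \<longlonglongrightarrow> 0 \<and> dk \<longlonglongrightarrow> d \<and> (\<forall>k. x + t k *\<^sub>R dk k \<in> S) \<longrightarrow>
      (\<exists>vk. vk \<longlonglongrightarrow> v \<and> (\<forall>\<^sub>F k in sequentially. vk k \<in> tangent_cone S (x + t k *\<^sub>R dk k)))"
      using v unfolding directional_regular_tangent_cone_def by simp
    have "(\<forall>k. t k > 0) \<and> t \<longlonglongrightarrow> 0 \<and> ee \<longlonglongrightarrow> d \<and> (\<forall>k. x + t k *\<^sub>R ee k \<in> S)"
      using te(1,4) t0 ed by simp
    from vv[rule_format, OF this] show ?thesis using that by blast
  qed
  have "(\<lambda>k. norm (vk k - v)) \<longlonglongrightarrow> norm (v - v)"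
    by (intro tendsto_intros vk(1))
  hence "(\<lambda>k. norm (vk k - v)) \<longlonglongrightarrow> 0" by simp
  hence "\<forall>\<^sub>F k in sequentially. norm (vk k - v) < \<epsilon>"
    using e order_tendstoD(2) by blast
  then obtain k where "norm (vk k - v) < \<epsilon>" "vk k \<in> tangent_cone S (x + t k *\<^sub>R ee k)"
    using eventually_happens'[OF _ eventually_conj[OF _ vk(2)]] by auto
  thus False using te(5)[of k] by blast
qed


lemma core_lemma:
  fixes S :: "'a::euclidean_space set"
  assumes S: "closed S" and v: "v \<in> directional_regular_tangent_cone S x d"
    and tpos: "\<forall>k. t k > 0" and t0: "t \<longlonglongrightarrow> 0" and hpos: "\<forall>k. h k > 0"
    and ht: "(\<lambda>k. h k / t k) \<longlonglongrightarrow> 0" and ed: "e \<longlonglongrightarrow> d" and eS: "\<forall>k. x + t k *\<^sub>R e k \<in> S"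
  shows "\<exists>q. (\<forall>k. q k \<in> S) \<and> (\<lambda>k. (1 / h k) *\<^sub>R (q k - (x + t k *\<^sub>R e k + h k *\<^sub>R v))) \<longlonglongrightarrow> 0"
proof -
  define z where "z k = x + t k *\<^sub>R e k + h k *\<^sub>R v" for k
  have Sne: "S \<noteq> {}" using eS by auto
  have "\<forall>k. \<exists>q. q \<in> S \<and> infdist (z k) S = dist (z k) q"
    using infdist_attains_inf[OF S Sne] by metis
  then obtain q where q: "\<And>k. q k \<in> S" "\<And>k. infdist (z k) S = dist (z k) (q k)"
    by metis
  have main: "(\<lambda>k. infdist (z k) S / h k) \<longlonglongrightarrow> 0"
    unfolding tendsto_iff
  proof (intro allI impI)
    fix r :: real assume r: "r > 0"
    define \<epsilon> where "\<epsilon> = r / 4"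
    have \<epsilon>: "\<epsilon> > 0" using r unfolding \<epsilon>_def by simp
    obtain \<delta> where \<delta>: "\<delta> > 0" and U: "\<And>t e'. 0 < t \<Longrightarrow> t < \<delta> \<Longrightarrow> norm (e' - d) < \<delta> \<Longrightarrow> x + t *\<^sub>R e' \<in> S \<Longrightarrow>
           (\<exists>u\<in>tangent_cone S (x + t *\<^sub>R e'). norm (u - v) < \<epsilon>)"
      using uniform_lemma[OF v \<epsilon>] by blast
    have ev1: "\<forall>\<^sub>F k in sequentially. t k < \<delta>"
      using t0 \<delta> order_tendstoD(2) by blast
    have "(\<lambda>k. norm (e k - d)) \<longlonglongrightarrow> norm (d - d)"
      by (intro tendsto_intros ed)
    hence ev2: "\<forall>\<^sub>F k in sequentially. norm (e k - d) < \<delta> / 2"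
      by (rule order_tendstoD(2)) (simp add: \<delta>)
    have "(\<lambda>k. h k / t k * (2 * norm v)) \<longlonglongrightarrow> 0 * (2 * norm v)"
      by (intro tendsto_intros ht)
    hence ev3: "\<forall>\<^sub>F k in sequentially. h k / t k * (2 * norm v) < \<delta> / 2"
      by (rule order_tendstoD(2)) (simp add: \<delta>)
    have "\<forall>\<^sub>F k in sequentially. dist (infdist (z k) S / h k) 0 < r"
      using eventually_conj[OF ev1 eventually_conj[OF ev2 ev3]]
    proof eventually_elim
      case (elim k)
      hence k1: "t k < \<delta>" and k2: "norm (e k - d) < \<delta> / 2"
        and k3: "h k / t k * (2 * norm v) < \<delta> / 2" by auto
      define y where "y = x + t k *\<^sub>R e k"
      have yS: "y \<in> S" using eS unfolding y_def by simp
      have tk: "t k > 0" and hk: "h k > 0" using tpos hpos by auto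
      have "infdist (y + h k *\<^sub>R v) S \<le> 2 * \<epsilon> * h k"
      proof (rule dini_lemma[OF S yS hk \<epsilon>])
        fix s p assume s: "s \<in> {0..h k}" and pS: "p \<in> S"
          and pd: "dist (y + s *\<^sub>R v) p = infdist (y + s *\<^sub>R v) S"
        have "infdist (y + s *\<^sub>R v) S \<le> dist (y + s *\<^sub>R v) y"
          by (rule infdist_le[OF yS])
        also have "\<dots> = s * norm v" using s by (simp add: dist_norm)
        finally have i1: "dist (y + s *\<^sub>R v) p \<le> s * norm v" using pd by simp
        have "norm (p - y) \<le> dist (y + s *\<^sub>R v) p + s * norm v"
          using norm_triangle_ineq[of "p - (y + s *\<^sub>R v)" "s *\<^sub>R v"] s
          by (simp add: dist_norm norm_minus_commute)
        also have "\<dots> \<le> 2 * (h k * norm v)"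
          using i1 s mult_right_mono[of s "h k" "norm v"] by auto
        finally have py: "norm (p - y) \<le> 2 * (h k * norm v)" .
        define e' where "e' = e k + (1 / t k) *\<^sub>R (p - y)"
        have xe: "x + t k *\<^sub>R e' = p"
          using tk unfolding e'_def y_def by (simp add: algebra_simps)
        have "e' - d = (e k - d) + (1 / t k) *\<^sub>R (p - y)" unfolding e'_def by (simp add: algebra_simps)
        hence "norm (e' - d) \<le> norm (e k - d) + norm ((1 / t k) *\<^sub>R (p - y))"
          using norm_triangle_ineq by metis
        also have "norm ((1 / t k) *\<^sub>R (p - y)) = (1 / t k) * norm (p - y)" using tk by simp
        finally have "norm (e' - d) \<le> norm (e k - d) + (1 / t k) * norm (p - y)" .
        also have "(1 / t k) * norm (p - y) \<le> (1 / t k) * (2 * (h k * norm v))"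
          using py tk by (intro mult_left_mono) auto
        also have "(1 / t k) * (2 * (h k * norm v)) = h k / t k * (2 * norm v)" by simp
        finally have "norm (e' - d) < \<delta>" using k2 k3 by linarith
        from U[OF tk k1 this] show "\<exists>u\<in>tangent_cone S p. norm (u - v) < \<epsilon>"
          using xe pS by simp
      qed
      hence "infdist (z k) S \<le> r / 2 * h k" unfolding z_def y_def \<epsilon>_def by simp
      hence "infdist (z k) S / h k \<le> r / 2" using hk by (simp add: divide_le_eq)
      moreover have "infdist (z k) S / h k \<ge> 0" using hk infdist_nonneg[of "z k" S] by simp
      ultimately have "infdist (z k) S / h k < r" "infdist (z k) S / h k \<ge> 0" using r by linarith+
      thus ?case by (simp only: dist_real_def diff_zero abs_of_nonneg)
    qed
    thus "\<forall>\<^sub>F k in sequentially. dist (infdist (z k) S / h k) 0 < r" .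
  qed
  have "(\<lambda>k. norm ((1 / h k) *\<^sub>R (q k - z k))) = (\<lambda>k. infdist (z k) S / h k)"
  proof
    fix k
    show "norm ((1 / h k) *\<^sub>R (q k - z k)) = infdist (z k) S / h k"
      using q(2)[of k] hpos[rule_format, of k] by (simp add: dist_norm norm_minus_commute)
  qed
  with main have "(\<lambda>k. norm ((1 / h k) *\<^sub>R (q k - z k))) \<longlonglongrightarrow> 0" by simp
  hence "(\<lambda>k. (1 / h k) *\<^sub>R (q k - z k)) \<longlonglongrightarrow> 0"
    using tendsto_norm_zero_iff by blast
  thus ?thesis using q(1) unfolding z_def by blast
qed


lemma zero_in_tangent_cone:
  assumes "y \<in> S"
  shows "0 \<in> tangent_cone S y"
proof -
  have "(\<forall>k. (\<lambda>k::nat. 1 / real (Suc k)) k > 0) \<and> (\<lambda>k::nat. 1 / real (Suc k)) \<longlonglongrightarrow> 0 \<and>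
      (\<lambda>k::nat. 0) \<longlonglongrightarrow> 0 \<and> (\<forall>k. y + (\<lambda>k::nat. 1 / real (Suc k)) k *\<^sub>R (\<lambda>k::nat. 0) k \<in> S)"
    using assms LIMSEQ_inverse_real_of_nat[unfolded inverse_eq_divide] by simp
  thus ?thesis unfolding tangent_cone_def by (intro CollectI exI)
qed

lemma zero_in_regular:
  "0 \<in> directional_regular_tangent_cone S x d"
  unfolding directional_regular_tangent_cone_def
proof (intro CollectI allI impI)
  fix t :: "nat \<Rightarrow> real" and dk
  assume H: "(\<forall>k. t k > 0) \<and> t \<longlonglongrightarrow> 0 \<and> dk \<longlonglongrightarrow> d \<and> (\<forall>k. x + t k *\<^sub>R dk k \<in> S)"
  have "(\<lambda>k::nat. 0) \<longlonglongrightarrow> 0 \<and> (\<forall>\<^sub>F k in sequentially. (\<lambda>k::nat. 0) k \<in> tangent_cone S (x + t k *\<^sub>R dk k))"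
  proof
    show "(\<lambda>k::nat. 0) \<longlonglongrightarrow> 0" by simp
    have "\<forall>k. 0 \<in> tangent_cone S (x + t k *\<^sub>R dk k)" using H zero_in_tangent_cone by blast
    thus "\<forall>\<^sub>F k in sequentially. (\<lambda>k::nat. 0) k \<in> tangent_cone S (x + t k *\<^sub>R dk k)"
      by (simp add: always_eventually)
  qed
  thus "\<exists>vk. vk \<longlonglongrightarrow> 0 \<and> (\<forall>\<^sub>F k in sequentially. vk k \<in> tangent_cone S (x + t k *\<^sub>R dk k))"
    by blast
qed

lemma part_T2:
  fixes S :: "'a::euclidean_space set"
  assumes S: "closed S" and w: "w \<in> second_order_tangent_set S x d"
    and v: "v \<in> directional_regular_tangent_cone S x d"
  shows "w + v \<in> second_order_tangent_set S x d"
proof -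
  from w obtain t wk where tpos: "\<forall>k. t k > 0" and t0: "t \<longlonglongrightarrow> 0" and wk: "wk \<longlonglongrightarrow> w"
    and wS: "\<forall>k. x + t k *\<^sub>R d + ((1/2) * (t k)\<^sup>2) *\<^sub>R wk k \<in> S"
    unfolding second_order_tangent_set_def by blast
  define e where "e k = d + (t k / 2) *\<^sub>R wk k" for k
  define h where "h k = (1/2) * (t k)\<^sup>2" for k
  have hpos: "\<forall>k. h k > 0"
  proof
    fix k have "t k > 0" using tpos by simp
    thus "h k > 0" unfolding h_def by simp
  qed
  have "(\<lambda>k. h k / t k) = (\<lambda>k. t k / 2)"
  proof
    fix k show "h k / t k = t k / 2" using tpos[rule_format, of k] unfolding h_def
      by (simp add: power2_eq_square)
  qed
  moreover have r2: "(\<lambda>k. t k / 2) \<longlonglongrightarrow> 0" by (rule tendsto_divide_zero[OF t0])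
  ultimately have ht: "(\<lambda>k. h k / t k) \<longlonglongrightarrow> 0" by simp
  have "e \<longlonglongrightarrow> d + 0 *\<^sub>R w" unfolding e_def by (intro tendsto_add tendsto_const tendsto_scaleR r2 wk)
  hence ed: "e \<longlonglongrightarrow> d" by simp
  have teq: "t k *\<^sub>R e k = t k *\<^sub>R d + h k *\<^sub>R wk k" for k
    unfolding e_def h_def by (simp add: scaleR_add_right power2_eq_square)
  have eS: "\<forall>k. x + t k *\<^sub>R e k \<in> S" using wS teq unfolding h_def by (simp add: add.assoc)
  obtain q where qS: "\<forall>k. q k \<in> S"
    and qlim: "(\<lambda>k. (1 / h k) *\<^sub>R (q k - (x + t k *\<^sub>R e k + h k *\<^sub>R v))) \<longlonglongrightarrow> 0"
    using core_lemma[OF S v tpos t0 hpos ht ed eS] by blast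
  define w' where "w' k = wk k + v + (1 / h k) *\<^sub>R (q k - (x + t k *\<^sub>R e k + h k *\<^sub>R v))" for k
  have "w' \<longlonglongrightarrow> w + v + 0" unfolding w'_def by (intro tendsto_intros wk qlim)
  hence w'lim: "w' \<longlonglongrightarrow> w + v" by simp
  have eq: "x + t k *\<^sub>R d + ((1/2) * (t k)\<^sup>2) *\<^sub>R w' k = q k" for k
  proof -
    have hne: "h k \<noteq> 0" using hpos by (simp add: less_imp_neq[symmetric])
    have "h k *\<^sub>R w' k = h k *\<^sub>R wk k + h k *\<^sub>R v + (q k - (x + t k *\<^sub>R e k + h k *\<^sub>R v))"
      unfolding w'_def using hne by (simp add: scaleR_add_right)
    hence "x + t k *\<^sub>R d + h k *\<^sub>R w' k = q k" using teq[of k] by (simp add: algebra_simps)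
    thus ?thesis unfolding h_def .
  qed
  show ?thesis unfolding second_order_tangent_set_def
    using tpos t0 w'lim eq qS by (intro CollectI exI[of _ t] exI[of _ w']) simp
qed

lemma part_T2a:
  fixes S :: "'a::euclidean_space set"
  assumes S: "closed S" and w: "w \<in> asymptotic_second_order_tangent_cone S x d"
    and v: "v \<in> directional_regular_tangent_cone S x d"
  shows "w + v \<in> asymptotic_second_order_tangent_cone S x d"
proof -
  from w obtain t r wk where tpos: "\<forall>k. t k > 0" and rpos: "\<forall>k. r k > 0" and t0: "t \<longlonglongrightarrow> 0"
    and r0: "r \<longlonglongrightarrow> 0" and tr: "(\<lambda>k. t k / r k) \<longlonglongrightarrow> 0" and wk: "wk \<longlonglongrightarrow> w"
    and wS: "\<forall>k. x + t k *\<^sub>R d + ((1/2) * t k * r k) *\<^sub>R wk k \<in> S"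
    unfolding asymptotic_second_order_tangent_cone_def by blast
  define e where "e k = d + (r k / 2) *\<^sub>R wk k" for k
  define h where "h k = (1/2) * t k * r k" for k
  have hpos: "\<forall>k. h k > 0" using tpos rpos unfolding h_def by simp
  have "(\<lambda>k. h k / t k) = (\<lambda>k. r k / 2)"
  proof
    fix k show "h k / t k = r k / 2" using tpos[rule_format, of k] unfolding h_def
      by simp
  qed
  moreover have r2: "(\<lambda>k. r k / 2) \<longlonglongrightarrow> 0" by (rule tendsto_divide_zero[OF r0])
  ultimately have ht: "(\<lambda>k. h k / t k) \<longlonglongrightarrow> 0" by simp
  have "e \<longlonglongrightarrow> d + 0 *\<^sub>R w" unfolding e_def by (intro tendsto_add tendsto_const tendsto_scaleR r2 wk)
  hence ed: "e \<longlonglongrightarrow> d" by simp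
  have teq: "t k *\<^sub>R e k = t k *\<^sub>R d + h k *\<^sub>R wk k" for k
    unfolding e_def h_def by (simp add: scaleR_add_right)
  have eS: "\<forall>k. x + t k *\<^sub>R e k \<in> S" using wS teq unfolding h_def by (simp add: add.assoc)
  obtain q where qS: "\<forall>k. q k \<in> S"
    and qlim: "(\<lambda>k. (1 / h k) *\<^sub>R (q k - (x + t k *\<^sub>R e k + h k *\<^sub>R v))) \<longlonglongrightarrow> 0"
    using core_lemma[OF S v tpos t0 hpos ht ed eS] by blast
  define w' where "w' k = wk k + v + (1 / h k) *\<^sub>R (q k - (x + t k *\<^sub>R e k + h k *\<^sub>R v))" for k
  have "w' \<longlonglongrightarrow> w + v + 0" unfolding w'_def by (intro tendsto_intros wk qlim)
  hence w'lim: "w' \<longlonglongrightarrow> w + v" by simp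
  have eq: "x + t k *\<^sub>R d + ((1/2) * t k * r k) *\<^sub>R w' k = q k" for k
  proof -
    have hne: "h k \<noteq> 0" using hpos by (simp add: less_imp_neq[symmetric])
    have "h k *\<^sub>R w' k = h k *\<^sub>R wk k + h k *\<^sub>R v + (q k - (x + t k *\<^sub>R e k + h k *\<^sub>R v))"
      unfolding w'_def using hne by (simp add: scaleR_add_right)
    hence "x + t k *\<^sub>R d + h k *\<^sub>R w' k = q k" using teq[of k] by (simp add: algebra_simps)
    thus ?thesis unfolding h_def .
  qed
  show ?thesis unfolding asymptotic_second_order_tangent_cone_def
    using tpos rpos t0 r0 tr w'lim eq qS
    by (intro CollectI exI[of _ t] exI[of _ r] exI[of _ w']) simp
qed

lemma sum_eq:
  assumes "\<And>w v. w \<in> A \<Longrightarrow> v \<in> B \<Longrightarrow> w + v \<in> A" and "(0::'a::monoid_add) \<in> B"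
  shows "A + B = A"
proof
  show "A + B \<subseteq> A" using assms(1) by (auto elim: set_plus_elim)
  show "A \<subseteq> A + B"
  proof
    fix w assume "w \<in> A"
    hence "w + 0 \<in> A + B" using assms(2) by (rule set_plus_intro)
    thus "w \<in> A + B" by simp
  qed
qed

theorem proposition2p3:
  fixes S :: "(real ^ 'n) set" and x d :: "real ^ 'n"
  assumes "closed S" and "x \<in> S" and "d \<in> tangent_cone S x"
  shows "second_order_tangent_set S x d + directional_regular_tangent_cone S x d
           = second_order_tangent_set S x d \<and>
         asymptotic_second_order_tangent_cone S x d + directional_regular_tangent_cone S x d
           = asymptotic_second_order_tangent_cone S x d"
  using sum_eq[OF part_T2[OF assms(1)] zero_in_regular] sum_eq[OF part_T2a[OF assms(1)] zero_in_regular]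
  by blast

end
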